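(* Let $d\ge4$ and $\overline h\in\Lambda^{[d]}_u$. Then $\overline h$ has a density $\tilde h$ of the form $\tilde h=\sum_{\lambda\in\mathcal P'_d}C_\lambda u_\lambda$ with $C_\lambda\in\mathbb C$ if and only if $\frac{\partial\overline h}{\partial u}=0$ and $\frac{\partial}{\partial u_x}\frac{\delta\overline h}{\delta u}=0$.
   Context: $N=1$: $\mathcal A_u$ is the ring of polynomials in $u_k$ ($k>0$) with coefficients in $\mathbb C[[u]]$, $u=u_0$, $u_x=u_1$, graded by $\deg u_k=k$; $\partial_x=\sum u_{k+1}\partial/\partial u_k$; $\Lambda_u$ is the quotient of $\mathcal A_u$ by constants and $\mathrm{Im}\,\partial_x$, $\Lambda^{[d]}_u$ its degree-$d$ part, and a density of $\overline h$ is any $f$ with $\int f\,dx=\overline h$. $\frac{\partial}{\partial u}$ acts on local functionals (it commutes with $\partial_x$); $\frac{\delta\overline h}{\delta u}=\sum_i(-\partial_x)^i\frac{\partial h}{\partial u_i}$. For a partition $\lambda=(\lambda_1\ge\dots\ge\lambda_l)$, $u_\lambda=\prod_iu_{\lambda_i}$; $\mathcal P'_d$ is the set of partitions of $d$ with $l\ge2$, $\lambda_1=\lambda_2$, and all parts $\ge2$. *)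

theory Defs
  imports "HOL-Library.Multiset" "HOL-Computational_Algebra.Formal_Power_Series"
begin

text \<open>An element of A_u (N = 1) is represented by its coefficient function:
  a monomial prod_k u_k^{a_k} (k >= 1) is the multiset of indices k with
  multiplicities a_k; its coefficient lies in C[[u]] (formal power series in u = u_0).\<close>

type_synonym dpoly = "nat multiset \<Rightarrow> complex fps"

definition is_dpoly :: "dpoly \<Rightarrow> bool" where
  "is_dpoly f \<longleftrightarrow> finite {m. f m \<noteq> 0} \<and> (\<forall>m. 0 \<in># m \<longrightarrow> f m = 0)"

definition homogeneous :: "nat \<Rightarrow> dpoly \<Rightarrow> bool" where
  "homogeneous d f \<longleftrightarrow> (\<forall>m. f m \<noteq> 0 \<longrightarrow> sum_mset m = d)"

text \<open>partial derivative d/du_k; k = 0 is d/du acting on the C[[u]] coefficients\<close>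
definition pd :: "nat \<Rightarrow> dpoly \<Rightarrow> dpoly" where
  "pd k f = (\<lambda>m. if k = 0 then fps_deriv (f m)
                 else of_nat (count m k + 1) * f (m + {#k#}))"

text \<open>total derivative dx = sum_k u_{k+1} d/du_k\<close>
definition dx :: "dpoly \<Rightarrow> dpoly" where
  "dx f = (\<lambda>m. (if 1 \<in># m then fps_deriv (f (m - {#1#})) else 0)
     + (\<Sum>k\<in>{k. 1 \<le> k \<and> Suc k \<in># m}.
          of_nat (count (m - {#Suc k#}) k + 1) * f (m - {#Suc k#} + {#k#})))"

definition const_dp :: "complex \<Rightarrow> dpoly" where
  "const_dp c = (\<lambda>m. if m = {#} then fps_const c else 0)"

text \<open>f and g define the same local functional: f - g in C + Im dx\<close>
definition same_functional :: "dpoly \<Rightarrow> dpoly \<Rightarrow> bool" where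
  "same_functional f g \<longleftrightarrow>
     (\<exists>c g0. is_dpoly g0 \<and> (\<forall>m. f m - g m = const_dp c m + dx g0 m))"

definition ord_bound :: "dpoly \<Rightarrow> nat" where
  "ord_bound f = Max ({0} \<union> (\<Union>m\<in>{m. f m \<noteq> 0}. set_mset m))"

definition vd :: "dpoly \<Rightarrow> dpoly" where
  "vd f = (\<lambda>m. \<Sum>i\<le>ord_bound f. (((\<lambda>g n. - dx g n) ^^ i) (pd i f)) m)"

definition Pprime :: "nat \<Rightarrow> nat multiset set" where
  "Pprime d = {lam. sum_mset lam = d \<and> size lam \<ge> 2 \<and> (\<forall>k\<in>#lam. 2 \<le> k)
                  \<and> count lam (Max (set_mset lam)) \<ge> 2}"

definition partition_comb :: "nat \<Rightarrow> (nat multiset \<Rightarrow> complex) \<Rightarrow> dpoly" where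
  "partition_comb d C = (\<lambda>m. if m \<in> Pprime d then fps_const (C m) else 0)"

end

theory Submission
  imports Defs
begin

definition bnd :: "nat \<Rightarrow> nat multiset \<Rightarrow> bool" where
  "bnd a m \<longleftrightarrow> (\<forall>x\<in>#m. x \<le> a)"
definition bounded :: "nat \<Rightarrow> dpoly \<Rightarrow> bool" where
  "bounded a f \<longleftrightarrow> (\<forall>m. f m \<noteq> 0 \<longrightarrow> bnd a m)"
definition mulu :: "nat \<Rightarrow> dpoly \<Rightarrow> dpoly" where
  "mulu j g = (\<lambda>m. if j \<in># m then g (m - {#j#}) else 0)"
definition dxN :: "nat \<Rightarrow> dpoly \<Rightarrow> dpoly" where
  "dxN N f = (\<lambda>m. \<Sum>k<N. mulu (Suc k) (pd k f) m)"

lemma dx_dxN: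
  assumes "bnd N m"
  shows "dx f m = dxN N f m"
proof -
  have S: "(\<Sum>k\<in>{k. 1 \<le> k \<and> Suc k \<in># m}.
          of_nat (count (m - {#Suc k#}) k + 1) * f (m - {#Suc k#} + {#k#}))
        = (\<Sum>k\<in>{1..<N}. mulu (Suc k) (pd k f) m)"
  proof (rule sum.mono_neutral_cong_left)
    show "finite {1..<N}" by simp
    show "{k. 1 \<le> k \<and> Suc k \<in># m} \<subseteq> {1..<N}"
      using assms by (auto simp: bnd_def)
    show "\<forall>i\<in>{1..<N} - {k. 1 \<le> k \<and> Suc k \<in># m}. mulu (Suc i) (pd i f) m = 0"
      by (auto simp: mulu_def)
    show "\<And>x. x \<in> {k. 1 \<le> k \<and> Suc k \<in># m} \<Longrightarrow>
         of_nat (count (m - {#Suc x#}) x + 1) * f (m - {#Suc x#} + {#x#}) =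
         mulu (Suc x) (pd x f) m"
      by (auto simp: mulu_def pd_def)
  qed
  show ?thesis
  proof (cases N)
    case 0
    then have "\<not> 1 \<in># m" "{k. 1 \<le> k \<and> Suc k \<in># m} = {}" using assms by (auto simp: bnd_def)
    then show ?thesis unfolding dx_def dxN_def S using 0 by simp
  next
    case (Suc N')
    have "(\<Sum>k<N. mulu (Suc k) (pd k f) m) = mulu 1 (pd 0 f) m + (\<Sum>k\<in>{1..<N}. mulu (Suc k) (pd k f) m)"
      using Suc by (simp add: lessThan_Suc_atMost sum.atLeast_Suc_atMost atLeast0AtMost[symmetric] atLeastLessThanSuc_atLeastAtMost)
    then show ?thesis unfolding dx_def dxN_def S[symmetric]
      by (simp add: mulu_def pd_def)
  qed
qed

lemma bnd_sum: "bnd (sum_mset m) m"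
  unfolding bnd_def
proof
  fix x assume "x \<in># m"
  then obtain m' where "m = add_mset x m'" by (metis multi_member_split)
  then show "x \<le> sum_mset m" by simp
qed

lemma bnd_mono: "bnd a m \<Longrightarrow> a \<le> b \<Longrightarrow> bnd b m"
  by (auto simp: bnd_def)

lemma bnd_add: "bnd a (m + n) \<longleftrightarrow> bnd a m \<and> bnd a n"
  by (auto simp: bnd_def)

lemma bnd_add_mset[simp]: "bnd a (add_mset x m) \<longleftrightarrow> x \<le> a \<and> bnd a m"
  by (auto simp: bnd_def)

lemma bnd_single: "bnd a {#x#} \<longleftrightarrow> x \<le> a"
  by (auto simp: bnd_def)

lemma bnd_diff: "bnd a m \<Longrightarrow> bnd a (m - n)"
  by (auto simp: bnd_def dest: in_diffD)

lemma pd_mulu: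
  assumes "j \<ge> 1"
  shows "pd i (mulu j g) m = mulu j (pd i g) m + (if i = j then g m else 0)"
proof (cases "i = 0")
  case True
  then show ?thesis using assms by (simp add: pd_def mulu_def)
next
  case False
  show ?thesis
  proof (cases "i = j")
    case True
    have "mulu j (pd i g) m = of_nat (count m i) * g m"
    proof (cases "i \<in># m")
      case True
      then obtain m' where m: "m = add_mset i m'" by (metis multi_member_split)
      show ?thesis using True \<open>i = j\<close> \<open>i \<noteq> 0\<close> by (simp add: m mulu_def pd_def)
    next
      case F: False
      then show ?thesis using \<open>i = j\<close> by (simp add: mulu_def count_eq_zero_iff)
    qed
    then show ?thesis using True False
      by (simp add: pd_def mulu_def algebra_simps)
  next
    case ne: False
    show ?thesis
    proof (cases "j \<in># m")
      case True
      then obtain m' where m: "m = add_mset j m'" by (metis multi_member_split)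
      show ?thesis using ne False by (simp add: m mulu_def pd_def)
    next
      case F: False
      then show ?thesis using ne False by (simp add: mulu_def pd_def)
    qed
  qed
qed

lemma pd_pd: "pd i (pd k f) = pd k (pd i f)"
proof (rule ext)
  fix m
  have e: "m + {#k#} + {#i#} = m + {#i#} + {#k#}" by (simp add: add_mset_commute)
  show "pd i (pd k f) m = pd k (pd i f) m"
    unfolding pd_def using e by (auto simp: algebra_simps)
qed

lemma pd_sum: "pd i (\<lambda>m. \<Sum>k\<in>K. F k m) m = (\<Sum>k\<in>K. pd i (F k) m)"
  by (simp add: pd_def fps_deriv_sum sum_distrib_left)

lemma pd_cong:
  assumes "\<And>n. bnd N n \<Longrightarrow> f n = g n" and "bnd N (m + {#i#})"
  shows "pd i f m = pd i g m"
  using assms by (auto simp: pd_def)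

lemma pd_dx: "pd i (dx f) m = dx (pd i f) m + (if i = 0 then 0 else pd (i - 1) f m)"
proof -
  define N where "N = Suc (sum_mset m + i)"
  have bm: "bnd N (m + {#i#})" unfolding N_def
    by (rule bnd_mono[OF bnd_sum]) simp
  then have bm2: "bnd N m" by (simp add: bnd_add)
  have iN: "i - 1 < N" unfolding N_def by simp
  have "pd i (dx f) m = pd i (dxN N f) m"
    by (rule pd_cong[OF _ bm]) (rule dx_dxN)
  also have "\<dots> = (\<Sum>k<N. pd i (mulu (Suc k) (pd k f)) m)"
    unfolding dxN_def by (rule pd_sum)
  also have "\<dots> = (\<Sum>k<N. mulu (Suc k) (pd k (pd i f)) m) + (\<Sum>k<N. if i = Suc k then pd k f m else 0)"
    by (simp add: pd_mulu pd_pd sum.distrib)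
  also have "(\<Sum>k<N. if i = Suc k then pd k f m else 0) = (if i = 0 then 0 else pd (i - 1) f m)"
  proof (cases i)
    case 0 then show ?thesis by simp
  next
    case (Suc i') then show ?thesis using iN by (simp add: sum.delta')
  qed
  also have "(\<Sum>k<N. mulu (Suc k) (pd k (pd i f)) m) = dx (pd i f) m"
    using dx_dxN[OF bm2] by (simp add: dxN_def)
  finally show ?thesis .
qed

abbreviation nd :: "dpoly \<Rightarrow> dpoly" where "nd \<equiv> (\<lambda>g n. - dx g n)"

lemma dx_add: "dx (\<lambda>m. f m + g m) m = dx f m + dx g m"
  by (simp add: dx_def sum.distrib algebra_simps)
lemma dx_diff: "dx (\<lambda>m. f m - g m) m = dx f m - dx g m"
  by (simp add: dx_def sum_subtractf algebra_simps)
lemma dx_zero: "dx (\<lambda>_. 0) = (\<lambda>_. 0)"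
  by (simp add: dx_def fun_eq_iff)
lemma dx_neg: "dx (\<lambda>m. - f m) m = - dx f m"
proof -
  have "dx (\<lambda>m. - f m) m = dx (\<lambda>m. (\<lambda>_. 0) m - f m) m" by simp
  also have "\<dots> = - dx f m" by (simp only: dx_diff dx_zero) simp
  finally show ?thesis .
qed

lemma pd_add: "pd k (\<lambda>m. f m + g m) = (\<lambda>m. pd k f m + pd k g m)"
  by (simp add: pd_def fun_eq_iff algebra_simps)
lemma pd_neg: "pd k (\<lambda>m. - f m) = (\<lambda>m. - pd k f m)"
  by (simp add: pd_def fun_eq_iff algebra_simps)
lemma pd_diff: "pd k (\<lambda>m. f m - g m) = (\<lambda>m. pd k f m - pd k g m)"
  by (simp add: pd_def fun_eq_iff algebra_simps)
lemma pd_zero: "pd k (\<lambda>_. 0) = (\<lambda>_. 0)"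
  by (simp add: pd_def fun_eq_iff)

lemma nd_add: "nd (\<lambda>m. f m + g m) = (\<lambda>m. nd f m + nd g m)"
  by (simp add: dx_add fun_eq_iff)
lemma nd_neg: "nd (\<lambda>m. - f m) = (\<lambda>m. - nd f m)"
  by (simp add: dx_neg fun_eq_iff)
lemma nd_zero: "nd (\<lambda>_. 0) = (\<lambda>_. 0)"
  by (simp add: dx_zero fun_eq_iff)

lemma iter_add: "(nd ^^ i) (\<lambda>m. f m + g m) = (\<lambda>m. (nd ^^ i) f m + (nd ^^ i) g m)"
  by (induct i) (simp_all add: nd_add del: add_uminus_conv_diff)
lemma iter_neg: "(nd ^^ i) (\<lambda>m. - f m) = (\<lambda>m. - (nd ^^ i) f m)"
  by (induct i) (simp_all add: nd_neg)
lemma iter_zero: "(nd ^^ i) (\<lambda>_. 0) = (\<lambda>_. 0)"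
  by (induct i) (simp_all add: nd_zero)
lemma iter_diff: "(nd ^^ i) (\<lambda>m. f m - g m) = (\<lambda>m. (nd ^^ i) f m - (nd ^^ i) g m)"
proof -
  have "(\<lambda>m. f m - g m) = (\<lambda>m. f m + (\<lambda>m. - g m) m)" by simp
  then show ?thesis by (simp only: iter_add iter_neg) simp
qed

lemma iter_dx: "(nd ^^ i) (dx g) = (\<lambda>m. - (nd ^^ Suc i) g m)"
proof -
  have "(nd ^^ Suc i) g = (nd ^^ i) (nd g)" by (simp add: funpow_Suc_right del: funpow.simps)
  also have "\<dots> = (\<lambda>m. - (nd ^^ i) (dx g) m)" by (simp add: iter_neg)
  finally show ?thesis by simp
qed

lemma pd0_dx: "pd 0 (dx f) = dx (pd 0 f)"
  using pd_dx[of 0 f] by (simp add: fun_eq_iff)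

lemma pd0_iter: "pd 0 ((nd ^^ i) g) = (nd ^^ i) (pd 0 g)"
proof (induct i)
  case 0 then show ?case by simp
next
  case (Suc i)
  then show ?case by (simp add: pd_neg pd0_dx)
qed

lemma pd1_iter:
  assumes "pd 0 g = (\<lambda>_. 0)"
  shows "pd 1 ((nd ^^ i) g) = (nd ^^ i) (pd 1 g)"
proof (induct i)
  case 0 then show ?case by simp
next
  case (Suc i)
  have "pd 1 ((nd ^^ Suc i) g) = (\<lambda>m. - pd 1 (dx ((nd ^^ i) g)) m)"
    by (simp add: pd_neg)
  also have "\<dots> = (\<lambda>m. - dx (pd 1 ((nd ^^ i) g)) m)"
    using pd_dx[of 1 "(nd ^^ i) g"] by (simp add: pd0_iter assms iter_zero)
  also have "\<dots> = (nd ^^ Suc i) (pd 1 g)" using Suc by simp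
  finally show ?case .
qed

lemma bounded_pd: "bounded a f \<Longrightarrow> bounded a (pd i f)"
  unfolding bounded_def pd_def
  by (auto simp del: fps_deriv_eq_0_iff split: if_splits) (metis fps_deriv_0)

lemma pd_zero_big: "bounded a f \<Longrightarrow> a < i \<Longrightarrow> pd i f = (\<lambda>_. 0)"
  unfolding bounded_def pd_def by (auto simp: fun_eq_iff)

lemma dx_nonzero:
  assumes "dx f m \<noteq> 0"
  shows "\<exists>k. Suc k \<in># m \<and> pd k f (m - {#Suc k#}) \<noteq> 0"
proof -
  have "dxN (sum_mset m) f m \<noteq> 0" using assms dx_dxN[OF bnd_sum] by metis
  then obtain k where "mulu (Suc k) (pd k f) m \<noteq> 0"
    unfolding dxN_def by (metis (no_types, lifting) sum.neutral)
  then show ?thesis by (auto simp: mulu_def split: if_splits)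
qed

lemma bounded_dx:
  assumes "bounded a f" shows "bounded (Suc a) (dx f)"
  unfolding bounded_def
proof (intro allI impI)
  fix m assume "dx f m \<noteq> 0"
  then obtain k where k: "Suc k \<in># m" "pd k f (m - {#Suc k#}) \<noteq> 0" using dx_nonzero by blast
  have "k \<le> a" using k(2) pd_zero_big[OF assms, of k] by (metis not_less)
  have "bnd a (m - {#Suc k#})" using k(2) bounded_pd[OF assms] by (auto simp: bounded_def)
  then have "bnd (Suc a) (m - {#Suc k#})" by (rule bnd_mono) simp
  moreover have "m = add_mset (Suc k) (m - {#Suc k#})" using k(1) by simp
  ultimately show "bnd (Suc a) m" using \<open>k \<le> a\<close> by (metis bnd_add_mset Suc_le_mono)
qed

lemma bounded_iter: "bounded a f \<Longrightarrow> bounded (a + i) ((nd ^^ i) f)"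
proof (induct i)
  case 0 then show ?case by simp
next
  case (Suc i)
  then have "bounded (Suc (a + i)) (dx ((nd ^^ i) f))" by (simp add: bounded_dx)
  then show ?case by (simp add: bounded_def)
qed

lemma bounded_mono: "bounded a f \<Longrightarrow> a \<le> b \<Longrightarrow> bounded b f"
  by (auto simp: bounded_def intro: bnd_mono)

lemma is_dpoly_bounded:
  assumes "is_dpoly f" shows "bounded (ord_bound f) f"
  unfolding bounded_def bnd_def
proof (intro allI impI ballI)
  fix m x assume "f m \<noteq> 0" "x \<in># m"
  have fin: "finite ({0} \<union> (\<Union>m\<in>{m. f m \<noteq> 0}. set_mset m))"
    using assms by (simp add: is_dpoly_def)
  show "x \<le> ord_bound f" unfolding ord_bound_def
    by (rule Max_ge[OF fin]) (use \<open>f m \<noteq> 0\<close> \<open>x \<in># m\<close> in blast)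
qed

lemma vd_eq:
  assumes "is_dpoly f" "bounded M f"
  shows "vd f = (\<lambda>m. \<Sum>i\<le>M. (nd ^^ i) (pd i f) m)"
proof (rule ext)
  fix m
  define B where "B = max M (ord_bound f)"
  have z: "\<And>i. (M < i \<or> ord_bound f < i) \<Longrightarrow> (nd ^^ i) (pd i f) m = 0"
  proof -
    fix i assume "M < i \<or> ord_bound f < i"
    then have "pd i f = (\<lambda>_. 0)"
      using pd_zero_big[OF assms(2)] pd_zero_big[OF is_dpoly_bounded[OF assms(1)]] by blast
    then show "(nd ^^ i) (pd i f) m = 0" by (simp add: iter_zero)
  qed
  have "vd f m = (\<Sum>i\<le>B. (nd ^^ i) (pd i f) m)"
    unfolding vd_def B_def
    by (rule sum.mono_neutral_left) (auto intro: z)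
  also have "\<dots> = (\<Sum>i\<le>M. (nd ^^ i) (pd i f) m)"
    unfolding B_def
    by (rule sum.mono_neutral_right) (auto intro: z)
  finally show "vd f m = (\<Sum>i\<le>M. (nd ^^ i) (pd i f) m)" .
qed

lemma supp_finite_subset: "finite {m. g m \<noteq> 0} \<Longrightarrow> {m. f m \<noteq> 0} \<subseteq> {m. g m \<noteq> 0} \<Longrightarrow> finite {m. f m \<noteq> (0::complex fps)}"
  by (rule finite_subset)

lemma is_dpoly_pd: assumes "is_dpoly f" shows "is_dpoly (pd k f)"
proof -
  have fin: "finite {m. f m \<noteq> 0}" and z: "\<And>m. 0 \<in># m \<Longrightarrow> f m = 0"
    using assms by (auto simp: is_dpoly_def)
  have "{m. pd k f m \<noteq> 0} \<subseteq> {m. f m \<noteq> 0} \<union> (\<lambda>m. m - {#k#}) ` {m. f m \<noteq> 0}"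
  proof
    fix m assume "m \<in> {m. pd k f m \<noteq> 0}"
    then have nz: "pd k f m \<noteq> 0" by simp
    show "m \<in> {m. f m \<noteq> 0} \<union> (\<lambda>m. m - {#k#}) ` {m. f m \<noteq> 0}"
    proof (cases "k = 0")
      case True
      then have "f m \<noteq> 0" using nz unfolding pd_def by (metis fps_deriv_0)
      then show ?thesis by simp
    next
      case False
      then have "f (m + {#k#}) \<noteq> 0" using nz unfolding pd_def by auto
      moreover have "m = m + {#k#} - {#k#}" by simp
      ultimately show ?thesis by blast
    qed
  qed
  then have "finite {m. pd k f m \<noteq> 0}" by (rule finite_subset) (use fin in simp)
  moreover have "\<forall>m. 0 \<in># m \<longrightarrow> pd k f m = 0"
    by (auto simp: pd_def z)
  ultimately show ?thesis by (simp add: is_dpoly_def)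
qed

lemma is_dpoly_dx: assumes "is_dpoly f" shows "is_dpoly (dx f)"
proof -
  define B where "B = ord_bound f"
  have bf: "bounded B f" unfolding B_def by (rule is_dpoly_bounded[OF assms])
  have "{m. dx f m \<noteq> 0} \<subseteq> (\<Union>k\<in>{..B}. (\<lambda>n. add_mset (Suc k) n) ` {n. pd k f n \<noteq> 0})"
  proof
    fix m assume "m \<in> {m. dx f m \<noteq> 0}"
    then obtain k where k: "Suc k \<in># m" "pd k f (m - {#Suc k#}) \<noteq> 0" using dx_nonzero by blast
    have "k \<le> B" using k(2) pd_zero_big[OF bf, of k] by (metis not_less)
    moreover have "m = add_mset (Suc k) (m - {#Suc k#})" using k(1) by simp
    ultimately show "m \<in> (\<Union>k\<in>{..B}. (\<lambda>n. add_mset (Suc k) n) ` {n. pd k f n \<noteq> 0})"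
      using k(2) by blast
  qed
  moreover have "finite (\<Union>k\<in>{..B}. (\<lambda>n. add_mset (Suc k) n) ` {n. pd k f n \<noteq> 0})"
    using is_dpoly_pd[OF assms] by (auto simp: is_dpoly_def)
  ultimately have "finite {m. dx f m \<noteq> 0}" by (rule finite_subset)
  moreover have "\<forall>m. 0 \<in># m \<longrightarrow> dx f m = 0"
  proof (intro allI impI)
    fix m :: "nat multiset" assume "0 \<in># m"
    show "dx f m = 0"
    proof (rule ccontr)
      assume "dx f m \<noteq> 0"
      then obtain k where k: "Suc k \<in># m" "pd k f (m - {#Suc k#}) \<noteq> 0" using dx_nonzero by blast
      have "0 \<in># m - {#Suc k#}" using \<open>0 \<in># m\<close> by (simp add: in_diff_count)
      then show False using k(2) is_dpoly_pd[OF assms, of k] by (auto simp: is_dpoly_def)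
    qed
  qed
  ultimately show ?thesis by (simp add: is_dpoly_def)
qed

lemma is_dpoly_add: "is_dpoly f \<Longrightarrow> is_dpoly g \<Longrightarrow> is_dpoly (\<lambda>m. f m + g m)"
  unfolding is_dpoly_def
  by (auto intro: finite_subset[of _ "{m. f m \<noteq> 0} \<union> {m. g m \<noteq> 0}"])
lemma is_dpoly_neg: "is_dpoly f \<Longrightarrow> is_dpoly (\<lambda>m. - f m)"
  unfolding is_dpoly_def by auto
lemma is_dpoly_diff: "is_dpoly f \<Longrightarrow> is_dpoly g \<Longrightarrow> is_dpoly (\<lambda>m. f m - g m)"
  unfolding is_dpoly_def
  by (auto intro: finite_subset[of _ "{m. f m \<noteq> 0} \<union> {m. g m \<noteq> 0}"])
lemma is_dpoly_zero: "is_dpoly (\<lambda>_. 0)"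
  unfolding is_dpoly_def by auto
lemma is_dpoly_const: "is_dpoly (const_dp c)"
  unfolding is_dpoly_def const_dp_def
  by (auto intro: finite_subset[of _ "{{#}}"])

lemma bounded_add: "bounded a f \<Longrightarrow> bounded a g \<Longrightarrow> bounded a (\<lambda>m. f m + g m)"
  unfolding bounded_def by (metis add.right_neutral add.left_neutral)
lemma bounded_diff: "bounded a f \<Longrightarrow> bounded a g \<Longrightarrow> bounded a (\<lambda>m. f m - g m)"
  unfolding bounded_def by (metis diff_zero diff_self)

lemma vd_add:
  assumes "is_dpoly f" "is_dpoly g"
  shows "vd (\<lambda>m. f m + g m) = (\<lambda>m. vd f m + vd g m)"
proof -
  define M where "M = max (ord_bound f) (ord_bound g)"
  have bf: "bounded M f" "bounded M g" unfolding M_def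
    using is_dpoly_bounded[OF assms(1)] is_dpoly_bounded[OF assms(2)] bounded_mono by auto
  show ?thesis
    using vd_eq[OF assms(1) bf(1)] vd_eq[OF assms(2) bf(2)]
      vd_eq[OF is_dpoly_add[OF assms] bounded_add[OF bf]]
    by (simp add: pd_add iter_add sum.distrib)
qed

lemma vd_diff:
  assumes "is_dpoly f" "is_dpoly g"
  shows "vd (\<lambda>m. f m - g m) = (\<lambda>m. vd f m - vd g m)"
proof -
  define M where "M = max (ord_bound f) (ord_bound g)"
  have bf: "bounded M f" "bounded M g" unfolding M_def
    using is_dpoly_bounded[OF assms(1)] is_dpoly_bounded[OF assms(2)] bounded_mono by auto
  show ?thesis
    using vd_eq[OF assms(1) bf(1)] vd_eq[OF assms(2) bf(2)]
      vd_eq[OF is_dpoly_diff[OF assms] bounded_diff[OF bf]]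
    by (simp add: pd_diff iter_diff sum_subtractf)
qed

lemma vd_const: "vd (const_dp c) = (\<lambda>_. 0)"
proof -
  have z: "\<And>i. pd i (const_dp c) = (\<lambda>_. 0)"
    by (auto simp: pd_def const_dp_def fun_eq_iff)
  show ?thesis unfolding vd_def z iter_zero by simp
qed

lemma telescope: "(\<Sum>i\<le>(n::nat). - a i + (if i = 0 then 0 else a (i - 1))) = - (a n :: 'a::ab_group_add)"
  by (induct n) (simp_all add: algebra_simps)

lemma vd_dx: assumes "is_dpoly f" shows "vd (dx f) = (\<lambda>_. 0)"
proof (rule ext)
  fix m
  define M where "M = ord_bound f"
  have bf: "bounded M f" unfolding M_def by (rule is_dpoly_bounded[OF assms])
  define a where "a i = (nd ^^ Suc i) (pd i f) m" for i
  have t: "(nd ^^ i) (pd i (dx f)) m = - a i + (if i = 0 then 0 else a (i - 1))" for i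
  proof -
    have e: "pd i (dx f) = (\<lambda>m. dx (pd i f) m + (if i = 0 then 0 else pd (i - 1) f m))"
      by (rule ext) (rule pd_dx)
    show ?thesis
    proof (cases i)
      case 0
      then show ?thesis using e by (simp add: a_def iter_dx del: funpow.simps)
    next
      case (Suc j)
      have e2: "pd i (dx f) = (\<lambda>m. dx (pd i f) m + pd j f m)"
        using e Suc by simp
      have "(nd ^^ i) (pd i (dx f)) m = (nd ^^ i) (dx (pd i f)) m + (nd ^^ i) (pd j f) m"
        unfolding e2 iter_add by simp
      also have "(nd ^^ i) (dx (pd i f)) m = - a i"
        unfolding iter_dx a_def by simp
      also have "(nd ^^ i) (pd j f) m = a (i - 1)"
        unfolding a_def using Suc by simp
      finally show ?thesis using Suc by simp
    qed
  qed
  have "vd (dx f) m = (\<Sum>i\<le>Suc M. (nd ^^ i) (pd i (dx f)) m)"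
    using vd_eq[OF is_dpoly_dx[OF assms] bounded_dx[OF bf]] by simp
  also have "\<dots> = - a (Suc M)" by (simp only: t telescope)
  also have "a (Suc M) = 0" unfolding a_def using pd_zero_big[OF bf, of "Suc M"] by (simp add: iter_zero del: funpow.simps)
  finally show "vd (dx f) m = 0" by simp
qed

lemma pd1_vd:
  assumes "is_dpoly f" "pd 0 f = (\<lambda>_. 0)"
  shows "pd 1 (vd f) = vd (pd 1 f)"
proof -
  define M where "M = ord_bound f"
  have bf: "bounded M f" unfolding M_def by (rule is_dpoly_bounded[OF assms(1)])
  have z: "pd 0 (pd i f) = (\<lambda>_. 0)" for i
    by (simp add: pd_pd[of 0 i] assms(2) pd_zero)
  show ?thesis
    unfolding vd_eq[OF assms(1) bf] vd_eq[OF is_dpoly_pd[OF assms(1)] bounded_pd[OF bf]]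
  proof (rule ext)
    fix m
    have "pd 1 (\<lambda>m. \<Sum>i\<le>M. (nd ^^ i) (pd i f) m) m = (\<Sum>i\<le>M. pd 1 ((nd ^^ i) (pd i f)) m)"
      by (rule pd_sum)
    also have "\<dots> = (\<Sum>i\<le>M. (nd ^^ i) (pd i (pd 1 f)) m)"
    proof (rule sum.cong)
      fix i show "pd 1 ((nd ^^ i) (pd i f)) m = (nd ^^ i) (pd i (pd 1 f)) m"
        using pd1_iter[OF z[of i], of i] pd_pd[of 1 i f] by simp
    qed simp
    finally show "pd 1 (\<lambda>m. \<Sum>i\<le>M. (nd ^^ i) (pd i f) m) m = (\<Sum>i\<le>M. (nd ^^ i) (pd i (pd 1 f)) m)" .
  qed
qed

definition nf :: "nat \<Rightarrow> dpoly \<Rightarrow> bool" where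
  "nf e N \<longleftrightarrow> is_dpoly N \<and> homogeneous e N \<and> (\<forall>m. N m \<noteq> 0 \<longrightarrow> 2 \<le> count m (Max (set_mset m)))"

lemma dx_top:
  assumes "bounded b P" "bnd b n" "b \<ge> 1"
  shows "dx P (add_mset (Suc b) n) = of_nat (count n b + 1) * P (add_mset b n)"
proof -
  define m where "m = add_mset (Suc b) n"
  define N where "N = sum_mset m"
  have bN: "bnd N m" unfolding N_def by (rule bnd_sum)
  then have bN': "b < N" unfolding m_def by simp
  have t: "mulu (Suc k) (pd k P) m = (if k = b then of_nat (count n b + 1) * P (add_mset b n) else 0)" for k
  proof (cases "k = b")
    case True
    then show ?thesis using assms(3) by (simp add: m_def mulu_def pd_def)
  next
    case False
    show ?thesis
    proof (cases "Suc k \<in># m")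
      case True
      then have "Suc k \<in># n" using False by (simp add: m_def)
      then have "m - {#Suc k#} = add_mset (Suc b) (n - {#Suc k#})" using False
        by (simp add: m_def)
      then have "\<not> bnd b (m - {#Suc k#})" by simp
      then have "pd k P (m - {#Suc k#}) = 0" using bounded_pd[OF assms(1), of k]
        by (auto simp: bounded_def)
      then show ?thesis using False by (simp add: mulu_def)
    next
      case F2: False
      then show ?thesis using False by (simp add: mulu_def)
    qed
  qed
  have "dx P m = dxN N P m" by (rule dx_dxN[OF bN])
  also have "\<dots> = (\<Sum>k<N. if k = b then of_nat (count n b + 1) * P (add_mset b n) else 0)"
    unfolding dxN_def by (simp only: t)
  also have "\<dots> = of_nat (count n b + 1) * P (add_mset b n)"
    using bN' by (simp add: sum.delta)
  finally show ?thesis unfolding m_def .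
qed

lemma iter_top:
  assumes "bounded a P" "bnd a n" "a \<ge> 1"
  shows "(nd ^^ Suc j) P (add_mset (a + Suc j) n) = (-1) ^ Suc j * of_nat (count n a + 1) * P (add_mset a n)"
proof (induct j)
  case 0
  then show ?case using dx_top[OF assms] by (simp add: algebra_simps)
next
  case (Suc j)
  define b where "b = a + Suc j"
  have bb: "bounded b ((nd ^^ Suc j) P)" unfolding b_def by (rule bounded_iter[OF assms(1)])
  have bn: "bnd b n" unfolding b_def by (rule bnd_mono[OF assms(2)]) simp
  have "b \<notin># n" using assms(2) unfolding b_def bnd_def by force
  then have c0: "count n b = 0" by (simp add: count_eq_zero_iff)
  have "(nd ^^ Suc (Suc j)) P (add_mset (a + Suc (Suc j)) n)
        = - dx ((nd ^^ Suc j) P) (add_mset (Suc b) n)"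
    by (simp add: b_def)
  also have "\<dots> = - ((nd ^^ Suc j) P (add_mset b n))"
    using dx_top[OF bb bn] c0 assms(3) unfolding b_def by simp
  also have "\<dots> = (-1) ^ Suc (Suc j) * of_nat (count n a + 1) * P (add_mset a n)"
    using Suc unfolding b_def by simp
  finally show ?case .
qed

lemma nf_vd_zero:
  assumes "nf e N" "e \<ge> 1" "vd N = (\<lambda>_. 0)"
  shows "N = (\<lambda>_. 0)"
proof (rule ccontr)
  assume "N \<noteq> (\<lambda>_. 0)"
  then obtain l0 where l0: "N l0 \<noteq> 0" by auto
  have dp: "is_dpoly N" and hom: "homogeneous e N"
    and top: "\<And>m. N m \<noteq> 0 \<Longrightarrow> 2 \<le> count m (Max (set_mset m))"
    using assms(1) by (auto simp: nf_def)
  define a where "a = ord_bound N"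
  have ba: "bounded a N" unfolding a_def by (rule is_dpoly_bounded[OF dp])
  define S where "S = {0} \<union> (\<Union>m\<in>{m. N m \<noteq> 0}. set_mset m)"
  have finS: "finite S" using dp by (simp add: S_def is_dpoly_def)
  have aS: "a = Max S" by (simp add: a_def ord_bound_def S_def)
  have "l0 \<noteq> {#}" using hom l0 assms(2) by (auto simp: homogeneous_def)
  then obtain x where x: "x \<in># l0" by (metis multiset_nonemptyE)
  have "0 \<notin># l0" using dp l0 by (auto simp: is_dpoly_def)
  then have "x \<ge> 1" using x by (metis less_one not_less)
  moreover have "x \<in> S" using x l0 by (auto simp: S_def)
  ultimately have a1: "a \<ge> 1" using aS finS by (meson Max_ge order_trans)
  have "a \<in> S" unfolding aS by (rule Max_in[OF finS]) (simp add: S_def)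
  then obtain l where l: "N l \<noteq> 0" "a \<in># l" using a1 by (auto simp: S_def)
  have bl: "bnd a l" using ba l(1) by (auto simp: bounded_def)
  have "Max (set_mset l) = a"
    using bl l(2) by (intro Max_eqI) (auto simp: bnd_def)
  then have c2: "2 \<le> count l a" using top[OF l(1)] by simp
  obtain l1 where l1: "l = add_mset a l1" using l(2) by (metis multi_member_split)
  have "0 < count l1 a" using c2 l1 by simp
  then have "a \<in># l1" by (simp only: count_greater_zero_iff)
  then obtain n where n: "l1 = add_mset a n" by (metis multi_member_split)
  have ln: "l = add_mset a (add_mset a n)" using l1 n by simp
  have bn: "bnd a n" using bl ln by simp
  define mu where "mu = add_mset (a + a) n"
  have bpd: "bounded a (pd i N)" for i by (rule bounded_pd[OF ba])
  have small: "(nd ^^ i) (pd i N) mu = 0" if "i < a" for i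
  proof -
    have "bounded (a + i) ((nd ^^ i) (pd i N))" by (rule bounded_iter[OF bpd])
    moreover have "\<not> bnd (a + i) mu" using that by (simp add: mu_def)
    ultimately show ?thesis by (auto simp: bounded_def)
  qed
  obtain j where j: "a = Suc j" using a1 by (cases a) auto
  have big: "(nd ^^ a) (pd a N) mu = (-1) ^ a * of_nat (count n a + 1) * pd a N (add_mset a n)"
    using iter_top[OF bpd bn a1, of j] j by (simp add: mu_def)
  also have "pd a N (add_mset a n) = of_nat (count n a + 2) * N l"
    using a1 by (simp add: pd_def ln)
  finally have big2: "(nd ^^ a) (pd a N) mu = (-1) ^ a * of_nat (count n a + 1) * (of_nat (count n a + 2) * N l)" .
  have "vd N mu = (\<Sum>i\<le>a. (nd ^^ i) (pd i N) mu)"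
    using vd_eq[OF dp ba] by simp
  also have "\<dots> = (\<Sum>i<a. (nd ^^ i) (pd i N) mu) + (nd ^^ a) (pd a N) mu"
    by (simp add: lessThan_Suc_atMost[symmetric])
  also have "(\<Sum>i<a. (nd ^^ i) (pd i N) mu) = 0" using small by simp
  finally have "vd N mu = (-1) ^ a * of_nat (count n a + 1) * (of_nat (count n a + 2) * N l)"
    using big2 by simp
  moreover have "(-1) ^ a * of_nat (count n a + 1) * (of_nat (count n a + 2) * N l) \<noteq> (0::complex fps)"
  proof -
    have "(of_nat (count n a + 1) :: complex fps) \<noteq> 0" by (simp only: of_nat_eq_0_iff)
    moreover have "(of_nat (count n a + 2) :: complex fps) \<noteq> 0" by (simp only: of_nat_eq_0_iff)
    ultimately show ?thesis using l(1) by (simp only: mult_eq_0_iff power_eq_0_iff) simp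
  qed
  ultimately show False using assms(3) by simp
qed

lemma nf_zero_if_trivial:
  assumes "nf e M" "e \<ge> 1" "is_dpoly g" "\<And>m. M m = const_dp c m + dx g m"
  shows "M = (\<lambda>_. 0)"
proof -
  have "M = (\<lambda>m. const_dp c m + dx g m)" using assms(4) by auto
  then have "vd M = (\<lambda>m. vd (const_dp c) m + vd (dx g) m)"
    using vd_add[OF is_dpoly_const is_dpoly_dx[OF assms(3)]] by simp
  then have "vd M = (\<lambda>_. 0)" by (simp add: vd_const vd_dx[OF assms(3)])
  then show ?thesis by (rule nf_vd_zero[OF assms(1,2)])
qed

lemma homog_add: "homogeneous e f \<Longrightarrow> homogeneous e g \<Longrightarrow> homogeneous e (\<lambda>m. f m + g m)"
  unfolding homogeneous_def by (metis add.right_neutral add.left_neutral)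
lemma homog_diff: "homogeneous e f \<Longrightarrow> homogeneous e g \<Longrightarrow> homogeneous e (\<lambda>m. f m - g m)"
  unfolding homogeneous_def by (metis diff_zero diff_self)

lemma homog_dx:
  assumes "homogeneous e f" shows "homogeneous (Suc e) (dx f)"
  unfolding homogeneous_def
proof (intro allI impI)
  fix m assume "dx f m \<noteq> 0"
  then obtain k where k: "Suc k \<in># m" "pd k f (m - {#Suc k#}) \<noteq> 0" using dx_nonzero by blast
  have sm: "sum_mset m = Suc k + sum_mset (m - {#Suc k#})"
  proof -
    obtain m' where "m = add_mset (Suc k) m'" using k(1) by (metis multi_member_split)
    then show ?thesis by simp
  qed
  show "sum_mset m = Suc e"
  proof (cases "k = 0")
    case True
    then have "f (m - {#Suc k#}) \<noteq> 0" using k(2) unfolding pd_def by (metis fps_deriv_0)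
    then show ?thesis using assms sm True by (auto simp: homogeneous_def)
  next
    case False
    then have "f (add_mset k (m - {#Suc k#})) \<noteq> 0" using k(2) unfolding pd_def by auto
    then have "k + sum_mset (m - {#Suc k#}) = e" using assms by (auto simp: homogeneous_def)
    then show ?thesis using sm by simp
  qed
qed

lemma nf_add: "nf e f \<Longrightarrow> nf e g \<Longrightarrow> nf e (\<lambda>m. f m + g m)"
  unfolding nf_def using is_dpoly_add homog_add by (metis add.right_neutral add.left_neutral)

lemma all_ones: "(\<forall>x\<in>#m. x = 1) \<Longrightarrow> sum_mset m = count m 1"
  by (induct m) auto

lemma fps_cancel: "(of_nat (Suc k) :: complex fps) * (fps_const (inverse (of_nat (Suc k))) * y) = y"
proof -
  have "(of_nat (Suc k) :: complex fps) * fps_const (inverse (of_nat (Suc k))) = fps_const (of_nat (Suc k) * inverse (of_nat (Suc k)))"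
    by (simp only: fps_of_nat[symmetric] fps_const_mult)
  also have "\<dots> = 1" by (simp del: of_nat_Suc)
  finally show ?thesis by (simp add: mult.assoc[symmetric])
qed

lemma reduce:
  assumes "d \<ge> 2"
  shows "is_dpoly g \<Longrightarrow> homogeneous d g \<Longrightarrow> bounded a g \<Longrightarrow>
         \<exists>N G. nf d N \<and> is_dpoly G \<and> (\<forall>m. g m = N m + dx G m)"
proof (induct a arbitrary: g)
  case 0
  have "g m = 0" for m
  proof (rule ccontr)
    assume nz: "g m \<noteq> 0"
    then have "bnd 0 m" "0 \<notin># m" "sum_mset m = d" using 0 by (auto simp: bounded_def is_dpoly_def homogeneous_def)
    then have "m = {#}" by (auto simp: bnd_def) (metis multiset_nonemptyE le_zero_eq)
    then show False using \<open>sum_mset m = d\<close> assms by simp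
  qed
  then have "\<forall>m. g m = (\<lambda>_. 0) m + dx (\<lambda>_. 0) m" by (simp add: dx_zero)
  moreover have "nf d (\<lambda>_. 0)" by (simp add: nf_def is_dpoly_zero homogeneous_def)
  ultimately show ?case using is_dpoly_zero by blast
next
  case (Suc a)
  note dpg = Suc.prems(1) and hg = Suc.prems(2) and bg = Suc.prems(3)
  show ?case
  proof (cases "a = 0")
    case True
    have "nf d g" unfolding nf_def
    proof (intro conjI allI impI dpg hg)
      fix m assume nz: "g m \<noteq> 0"
      have b1: "bnd 1 m" using bg nz True unfolding bounded_def by simp
      have n0: "0 \<notin># m" using dpg nz unfolding is_dpoly_def by blast
      have sd: "sum_mset m = d" using hg nz unfolding homogeneous_def by blast
      have ones: "\<forall>x\<in>#m. x = 1"
      proof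
        fix x assume "x \<in># m"
        have "x \<le> 1" using b1 \<open>x \<in># m\<close> unfolding bnd_def by blast
        moreover have "x \<noteq> 0"
        proof
          assume "x = 0"
          then show False using n0 \<open>x \<in># m\<close> by simp
        qed
        ultimately show "x = 1" by simp
      qed
      then have "count m 1 = d" using all_ones sd by simp
      then have "0 < count m 1" using assms by simp
      then have "1 \<in># m" by (simp only: count_greater_zero_iff)
      have "Max (set_mset m) = 1"
      proof (rule Max_eqI)
        show "finite (set_mset m)" by simp
        show "y \<le> 1" if "y \<in> set_mset m" for y using ones that by simp
        show "1 \<in> set_mset m" using \<open>1 \<in># m\<close> by simp
      qed
      then show "2 \<le> count m (Max (set_mset m))" using \<open>count m 1 = d\<close> assms by simp
    qed
    then have "nf d g \<and> is_dpoly (\<lambda>_. 0) \<and> (\<forall>m. g m = g m + dx (\<lambda>_. 0) m)"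
      by (simp add: dx_zero is_dpoly_zero)
    then show ?thesis by blast
  next
    case False
    then have a1: "a \<ge> 1" by simp
    define T where "T = Suc a"
    define g1 where "g1 m = (if 2 \<le> count m T then g m else 0)" for m
    define G where "G n = (if a \<in># n \<and> bnd a n
        then fps_const (inverse (of_nat (count n a))) * g (add_mset T (n - {#a#})) else 0)" for n
    define g2 where "g2 m = g m - g1 m - dx G m" for m
    have dpg': "finite {m. g m \<noteq> 0}" "\<And>m. 0 \<in># m \<Longrightarrow> g m = 0"
      using dpg by (auto simp: is_dpoly_def)
    have dpG: "is_dpoly G"
    proof -
      have "{n. G n \<noteq> 0} \<subseteq> (\<lambda>m. add_mset a (m - {#T#})) ` {m. g m \<noteq> 0}"
      proof
        fix n assume "n \<in> {n. G n \<noteq> 0}"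
        then have "a \<in># n" "g (add_mset T (n - {#a#})) \<noteq> 0" by (auto simp: G_def split: if_splits)
        moreover have "n = add_mset a (add_mset T (n - {#a#}) - {#T#})" using \<open>a \<in># n\<close> by simp
        ultimately show "n \<in> (\<lambda>m. add_mset a (m - {#T#})) ` {m. g m \<noteq> 0}" by blast
      qed
      then have "finite {n. G n \<noteq> 0}" by (rule finite_subset) (use dpg' in simp)
      moreover have "G n = 0" if "0 \<in># n" for n
      proof -
        have "0 \<in># add_mset T (n - {#a#})" using that a1 by (simp add: in_diff_count)
        then show ?thesis using dpg' by (simp add: G_def)
      qed
      ultimately show ?thesis by (auto simp: is_dpoly_def)
    qed
    have bG: "bounded a G" by (auto simp: bounded_def G_def)
    have hG: "homogeneous (d - 1) G"
      unfolding homogeneous_def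
    proof (intro allI impI)
      fix n assume "G n \<noteq> 0"
      then have "a \<in># n" "g (add_mset T (n - {#a#})) \<noteq> 0" by (auto simp: G_def split: if_splits)
      then have "T + sum_mset (n - {#a#}) = d" using hg by (auto simp: homogeneous_def)
      moreover have "sum_mset n = a + sum_mset (n - {#a#})"
      proof -
        obtain n' where "n = add_mset a n'" using \<open>a \<in># n\<close> by (metis multi_member_split)
        then show ?thesis by simp
      qed
      ultimately show "sum_mset n = d - 1" unfolding T_def by simp
    qed
    have hdG: "homogeneous d (dx G)" using homog_dx[OF hG] assms by simp
    have key: "dx G m = (if T \<in># m \<and> bnd a (m - {#T#}) then g m else 0)" if nb: "\<not> bnd a m" for m
    proof -
      define N where "N = Suc (sum_mset m + a)"
      have bN: "bnd N m" unfolding N_def by (rule bnd_mono[OF bnd_sum]) simp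
      have aN: "a < N" unfolding N_def by simp
      have t: "mulu (Suc k) (pd k G) m = (if k = a then mulu T (pd a G) m else 0)" for k
      proof (cases "k = a")
        case True then show ?thesis by (simp add: T_def)
      next
        case False
        show ?thesis
        proof (rule ccontr)
          assume "mulu (Suc k) (pd k G) m \<noteq> (if k = a then mulu T (pd a G) m else 0)"
          then have k1: "Suc k \<in># m" and k2: "pd k G (m - {#Suc k#}) \<noteq> 0"
            using False by (auto simp: mulu_def split: if_splits)
          have "k \<le> a" using k2 pd_zero_big[OF bG, of k] by (metis not_less)
          have "bnd a (m - {#Suc k#})" using k2 bounded_pd[OF bG, of k] by (auto simp: bounded_def)
          moreover have "m = add_mset (Suc k) (m - {#Suc k#})" using k1 by simp
          ultimately have "Suc k > a" using nb by (metis bnd_add_mset not_less)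
          then show False using \<open>k \<le> a\<close> False by simp
        qed
      qed
      have "dx G m = dxN N G m" by (rule dx_dxN[OF bN])
      also have "\<dots> = mulu T (pd a G) m"
        unfolding dxN_def t using aN by (simp add: sum.delta)
      also have "\<dots> = (if T \<in># m \<and> bnd a (m - {#T#}) then g m else 0)"
      proof (cases "T \<in># m")
        case True
        define c where "c = count (m - {#T#}) a"
        have e1: "mulu T (pd a G) m = of_nat (Suc c) * G (add_mset a (m - {#T#}))"
          using True a1 by (simp add: mulu_def pd_def c_def)
        have e2: "G (add_mset a (m - {#T#})) = (if bnd a (m - {#T#}) then fps_const (inverse (of_nat (Suc c))) * g m else 0)"
          using True a1 by (simp add: G_def c_def)
        show ?thesis
        proof (cases "bnd a (m - {#T#})")
          case bc: True
          have "mulu T (pd a G) m = g m" unfolding e1 e2 using bc by (simp only: if_True fps_cancel)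
          then show ?thesis using bc True by simp
        next
          case bc: False
          have "mulu T (pd a G) m = 0" unfolding e1 e2 using bc by simp
          then show ?thesis using bc by simp
        qed
      qed (simp add: mulu_def)
      finally show ?thesis .
    qed
    have bg2: "bounded a g2"
      unfolding bounded_def
    proof (intro allI impI)
      fix m assume nz: "g2 m \<noteq> 0"
      show "bnd a m"
      proof (rule ccontr)
        assume nb: "\<not> bnd a m"
        have k: "dx G m = (if T \<in># m \<and> bnd a (m - {#T#}) then g m else 0)" by (rule key[OF nb])
        show False
        proof (cases "g m = 0")
          case True
          then show False using nz k by (simp add: g2_def g1_def split: if_splits)
        next
          case False
          then have bT: "bnd T m" using bg by (simp add: bounded_def T_def)
          obtain x where x: "x \<in># m" "a < x" using nb by (auto simp: bnd_def)
          then have "x = T" using bT by (auto simp: bnd_def T_def)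
          then have Tm: "T \<in># m" using x by simp
          show False
          proof (cases "2 \<le> count m T")
            case True
            then have "T \<in># m - {#T#}" by (simp add: in_diff_count)
            then have "\<not> bnd a (m - {#T#})" unfolding bnd_def T_def by (metis Suc_n_not_le_n)
            then show False using nz k True by (simp add: g2_def g1_def)
          next
            case c: False
            have "bnd a (m - {#T#})" unfolding bnd_def
            proof
              fix y assume y: "y \<in># m - {#T#}"
              then have "y \<in># m" by (rule in_diffD)
              then have "y \<le> T" using bT by (simp add: bnd_def)
              moreover have "y \<noteq> T" using y c Tm by (auto simp: in_diff_count)
              ultimately show "y \<le> a" by (simp add: T_def)
            qed
            then show False using nz k c Tm by (simp add: g2_def g1_def)
          qed
        qed
      qed
    qed
    have dpg1: "is_dpoly g1"
      using dpg unfolding is_dpoly_def g1_def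
      by (auto intro: finite_subset[of _ "{m. g m \<noteq> 0}"])
    have hg1: "homogeneous d g1" using hg by (simp add: homogeneous_def g1_def)
    have nfg1: "nf d g1" unfolding nf_def
    proof (intro conjI allI impI dpg1 hg1)
      fix m assume "g1 m \<noteq> 0"
      then have c: "2 \<le> count m T" and "g m \<noteq> 0" by (auto simp: g1_def split: if_splits)
      then have bT: "bnd T m" using bg by (simp add: bounded_def T_def)
      have "0 < count m T" using c by linarith
      then have "T \<in># m" by (simp only: count_greater_zero_iff)
      then have "Max (set_mset m) = T" using bT by (intro Max_eqI) (auto simp: bnd_def)
      then show "2 \<le> count m (Max (set_mset m))" using c by simp
    qed
    have dpg2: "is_dpoly g2" unfolding g2_def
      by (rule is_dpoly_diff[OF is_dpoly_diff[OF dpg dpg1] is_dpoly_dx[OF dpG]])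
    have hg2: "homogeneous d g2" unfolding g2_def
      by (rule homog_diff[OF homog_diff[OF hg hg1] hdG])
    obtain N2 G2 where IH: "nf d N2" "is_dpoly G2" "\<forall>m. g2 m = N2 m + dx G2 m"
      using Suc.hyps[OF dpg2 hg2 bg2] by blast
    have "g m = (g1 m + N2 m) + dx (\<lambda>m. G m + G2 m) m" for m
      using IH(3) by (simp add: dx_add g2_def algebra_simps)
    moreover have "nf d (\<lambda>m. g1 m + N2 m)" by (rule nf_add[OF nfg1 IH(1)])
    moreover have "is_dpoly (\<lambda>m. G m + G2 m)" by (rule is_dpoly_add[OF dpG IH(2)])
    ultimately show ?thesis by blast
  qed
qed

lemma vd_zero: "vd (\<lambda>_. 0) = (\<lambda>_. 0)"
  unfolding vd_def pd_zero iter_zero by simp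

lemma nf_pd0: assumes "nf e N" shows "nf e (pd 0 N)"
proof -
  have "pd 0 N m \<noteq> 0 \<Longrightarrow> N m \<noteq> 0" for m by (auto simp: pd_def simp del: fps_deriv_eq_0_iff)
  then show ?thesis using assms is_dpoly_pd unfolding nf_def homogeneous_def by metis
qed

lemma nf_pd1:
  assumes "nf d N" "d \<ge> 3"
  shows "nf (d - 1) (pd 1 N)"
  unfolding nf_def
proof (intro conjI allI impI)
  show "is_dpoly (pd 1 N)" using assms(1) is_dpoly_pd by (auto simp: nf_def)
  have nz: "N (add_mset 1 m) \<noteq> 0" if "pd 1 N m \<noteq> 0" for m using that by (simp add: pd_def)
  show "homogeneous (d - 1) (pd 1 N)"
    unfolding homogeneous_def
  proof (intro allI impI)
    fix m assume "pd 1 N m \<noteq> 0"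
    then have "N (add_mset 1 m) \<noteq> 0" by (rule nz)
    then have "sum_mset (add_mset 1 m) = d" using assms(1) unfolding nf_def homogeneous_def by blast
    then show "sum_mset m = d - 1" by simp
  qed
  fix m assume "pd 1 N m \<noteq> 0"
  then have N1: "N (add_mset 1 m) \<noteq> 0" by (rule nz)
  have sd: "sum_mset (add_mset 1 m) = d" using N1 assms(1) by (auto simp: nf_def homogeneous_def)
  have c2: "2 \<le> count (add_mset 1 m) (Max (set_mset (add_mset 1 m)))" using N1 assms(1) by (auto simp: nf_def)
  have n0: "0 \<notin># m" using N1 assms(1) by (auto simp: nf_def is_dpoly_def)
  have "m \<noteq> {#}" using sd assms(2) by auto
  then have ne: "set_mset m \<noteq> {}" by simp
  define M where "M = Max (set_mset m)"
  have Mm: "M \<in># m" unfolding M_def using ne by (simp add: Max_in)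
  then have M1: "M \<ge> 1" using n0 by (cases M) auto
  have Mx: "Max (set_mset (add_mset 1 m)) = M"
    using ne M1 by (simp add: Max_insert M_def max_def)
  show "2 \<le> count m (Max (set_mset m))"
  proof (cases "M = 1")
    case True
    have ones: "\<forall>x\<in>#m. x = 1"
    proof
      fix x assume x: "x \<in># m"
      have "x \<le> M" unfolding M_def using x by simp
      moreover have "x \<noteq> 0" proof assume "x = 0" then show False using n0 x by simp qed
      ultimately show "x = 1" using True by simp
    qed
    have "count m 1 = d - 1" using all_ones[OF ones] sd by simp
    then show ?thesis using True assms(2) by (simp add: M_def)
  next
    case False
    then show ?thesis using c2 Mx by (simp add: M_def)
  qed
qed

theorem lemma8p5:
  fixes d :: nat and h :: dpoly
  assumes "d \<ge> 4" and "is_dpoly h" and "homogeneous d h"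
  shows "(\<exists>C. same_functional (partition_comb d C) h) \<longleftrightarrow>
           (same_functional (pd 0 h) (\<lambda>_. 0) \<and> pd 1 (vd h) = (\<lambda>_. 0))"
proof
  assume "\<exists>C. same_functional (partition_comb d C) h"
  then obtain C c g0 where g0: "is_dpoly g0"
    and e: "\<And>m. partition_comb d C m - h m = const_dp c m + dx g0 m"
    unfolding same_functional_def by blast
  define P where "P = partition_comb d C"
  have hP: "h = (\<lambda>m. (\<lambda>m. P m - const_dp c m) m - dx g0 m)"
    using e unfolding P_def by (auto simp: fun_eq_iff algebra_simps)
  have PP: "P = (\<lambda>m. (\<lambda>m. h m + const_dp c m) m + dx g0 m)"
    using e unfolding P_def by (auto simp: fun_eq_iff algebra_simps)
  have dpP: "is_dpoly P" unfolding PP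
    by (intro is_dpoly_add assms(2) is_dpoly_const is_dpoly_dx g0)
  have pd0P: "pd 0 P = (\<lambda>_. 0)" by (simp add: P_def pd_def partition_comb_def fun_eq_iff)
  have pd0c: "pd 0 (const_dp c) = (\<lambda>_. 0)" by (simp add: pd_def const_dp_def fun_eq_iff)
  have F1: "same_functional (pd 0 h) (\<lambda>_. 0)"
    unfolding same_functional_def
  proof (intro exI conjI allI)
    show "is_dpoly (\<lambda>m. - pd 0 g0 m)" by (intro is_dpoly_neg is_dpoly_pd g0)
    fix m
    have "pd 0 h m = - dx (pd 0 g0) m"
      by (subst hP) (simp add: pd_diff pd0P pd0c pd0_dx)
    then show "pd 0 h m - 0 = const_dp 0 m + dx (\<lambda>m. - pd 0 g0 m) m"
      by (simp add: dx_neg const_dp_def)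
  qed
  have "vd h = vd P"
  proof -
    have "vd h = (\<lambda>m. vd (\<lambda>m. P m - const_dp c m) m - vd (dx g0) m)"
      by (subst hP) (rule vd_diff[OF is_dpoly_diff[OF dpP is_dpoly_const] is_dpoly_dx[OF g0]])
    also have "vd (\<lambda>m. P m - const_dp c m) = (\<lambda>m. vd P m - vd (const_dp c) m)"
      by (rule vd_diff[OF dpP is_dpoly_const])
    finally show ?thesis by (simp add: vd_dx[OF g0] vd_const)
  qed
  moreover have "pd 1 P = (\<lambda>_. 0)"
    by (auto simp: P_def pd_def partition_comb_def Pprime_def fun_eq_iff)
  ultimately have "pd 1 (vd h) = (\<lambda>_. 0)"
    using pd1_vd[OF dpP pd0P] by (simp add: vd_zero)
  with F1 show "same_functional (pd 0 h) (\<lambda>_. 0) \<and> pd 1 (vd h) = (\<lambda>_. 0)" by blast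
next
  assume "same_functional (pd 0 h) (\<lambda>_. 0) \<and> pd 1 (vd h) = (\<lambda>_. 0)"
  then obtain c g0 where g0: "is_dpoly g0" and H1: "\<And>m. pd 0 h m - 0 = const_dp c m + dx g0 m"
    and H2: "pd 1 (vd h) = (\<lambda>_. 0)"
    unfolding same_functional_def by blast
  obtain N G where nfN: "nf d N" and dpG: "is_dpoly G" and hN: "\<And>m. h m = N m + dx G m"
    using reduce[of d h "ord_bound h"] assms is_dpoly_bounded[OF assms(2)] by auto
  have dpN: "is_dpoly N" using nfN by (simp add: nf_def)
  have hh: "h = (\<lambda>m. N m + dx G m)" using hN by auto
  have "pd 0 h = (\<lambda>m. pd 0 N m + dx (pd 0 G) m)"
    unfolding hh pd_add pd0_dx by simp
  then have eq: "\<And>m. pd 0 N m = const_dp c m + dx (\<lambda>m. g0 m - pd 0 G m) m"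
    using H1 by (simp add: dx_diff fun_eq_iff algebra_simps)
  have d1: "1 \<le> d" using assms(1) by simp
  have pd0N: "pd 0 N = (\<lambda>_. 0)"
    by (rule nf_zero_if_trivial[OF nf_pd0[OF nfN] d1 is_dpoly_diff[OF g0 is_dpoly_pd[OF dpG]] eq])
  have "vd h = vd N"
    unfolding hh vd_add[OF dpN is_dpoly_dx[OF dpG]] vd_dx[OF dpG] by simp
  then have vz: "vd (pd 1 N) = (\<lambda>_. 0)" using H2 pd1_vd[OF dpN pd0N] by simp
  have d3: "d \<ge> 3" using assms(1) by simp
  have d1': "d - 1 \<ge> 1" using assms(1) by simp
  have pd1N: "pd 1 N = (\<lambda>_. 0)"
    by (rule nf_vd_zero[OF nf_pd1[OF nfN d3] d1' vz])
  have no1: "N m = 0" if "1 \<in># m" for m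
  proof -
    define m' where "m' = m - {#1#}"
    have m: "m = add_mset 1 m'" using that unfolding m'_def by simp
    have "pd 1 N m' = 0" by (simp only: pd1N)
    then have "of_nat (count m' 1 + 1) * N (m' + {#1#}) = 0" unfolding pd_def by simp
    then have "of_nat (count m' 1 + 1) * N m = 0" unfolding m by simp
    moreover have "(of_nat (count m' 1 + 1) :: complex fps) \<noteq> 0" by (simp only: of_nat_eq_0_iff)
    ultimately show ?thesis by simp
  qed
  have const: "N m = fps_const (fps_nth (N m) 0)" for m
    using pd0N by (simp add: pd_def fun_eq_iff)
  define C where "C m = fps_nth (N m) 0" for m
  have PN: "partition_comb d C = N"
  proof (rule ext)
    fix m
    show "partition_comb d C m = N m"
    proof (cases "N m = 0")
      case True
      then show ?thesis by (simp add: partition_comb_def C_def)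
    next
      case False
      have sd: "sum_mset m = d" using False nfN by (auto simp: nf_def homogeneous_def)
      have c2: "2 \<le> count m (Max (set_mset m))" using False nfN by (auto simp: nf_def)
      have n0: "0 \<notin># m" using False dpN by (auto simp: is_dpoly_def)
      have n1: "1 \<notin># m" using False no1 by blast
      have "\<forall>k\<in>#m. 2 \<le> k"
      proof
        fix k assume "k \<in># m"
        have "k \<noteq> 0"
        proof assume "k = 0" then show False using n0 \<open>k \<in># m\<close> by simp qed
        moreover have "k \<noteq> 1"
        proof assume "k = 1" then show False using n1 \<open>k \<in># m\<close> by simp qed
        ultimately have "k \<noteq> 0" "k \<noteq> 1" by auto
        then show "2 \<le> k" by simp
      qed
      moreover have "size m \<ge> 2" using c2 count_le_size[of m "Max (set_mset m)"] by simp
      ultimately have "m \<in> Pprime d" using sd c2 by (simp add: Pprime_def)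
      then show ?thesis using const[of m] by (simp add: partition_comb_def C_def)
    qed
  qed
  have "same_functional (partition_comb d C) h"
    unfolding same_functional_def PN
  proof (intro exI conjI allI)
    show "is_dpoly (\<lambda>m. - G m)" by (rule is_dpoly_neg[OF dpG])
    fix m show "N m - h m = const_dp 0 m + dx (\<lambda>m. - G m) m"
      using hN[of m] by (simp add: dx_neg const_dp_def)
  qed
  then show "\<exists>C. same_functional (partition_comb d C) h" by blast
qed

end
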